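(* In $\mathbb{R}^3$ write $z=(z_1,\mathbf z_2)$ with $\mathbf z_2\in\mathbb{R}^2$. For $k\in\mathbb{N}$, $r>0$ let $C_{k,r}=[k,k+\tfrac14]\times D_r$, where $D_r\subset\mathbb{R}^2$ is the disc of radius $r$ centred at $0$. For $r\in(0,e^{-1})$ let $f(r)=\frac{1}{r|\ln r|\ln|\ln r|}$, and for $n\in\mathbb{N}$, $z\in\mathbb{R}^3$ let $V_n(z)=f\big(\tfrac{z_1}{25n}\big)\sum_{k=1}^n\mathbf 1_{C_{k,\sqrt{k/(25n)}}}(z)$ (and $V_n(z)=0$ off the union of these cylinders). Then $$\lim_{\varepsilon\to0^+}\ \sup_{x\in\mathbb{R}^3,\ n\in\mathbb{N}}\int_{|z-x|<\varepsilon}\frac{|V_n(z)|}{|z-x|}\,dz=0.$$ *)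

theory Defs
  imports "HOL-Analysis.Analysis"
begin

text \<open>Points of R^3 are z :: real^3 with z = (z$1, (z$2, z$3)).\<close>

definition fr :: "real \<Rightarrow> real" where
  "fr r = 1 / (r * \<bar>ln r\<bar> * ln \<bar>ln r\<bar>)"

definition cyl :: "nat \<Rightarrow> real \<Rightarrow> (real^3) set" where
  "cyl k r = {z. real k \<le> z$1 \<and> z$1 \<le> real k + 1/4 \<and> (z$2)\<^sup>2 + (z$3)\<^sup>2 \<le> r\<^sup>2}"

definition Vn :: "nat \<Rightarrow> real^3 \<Rightarrow> real" where
  "Vn n z = fr (z$1 / (25 * real n)) *
     (\<Sum>k=1..n. indicator (cyl k (sqrt (real k / (25 * real n)))) z)"

end

theory Submission
  imports Defs "HOL-Real_Asymp.Real_Asymp"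
begin


lemma exp_27: "exp (27/10::real) \<le> 20"
proof -
  have "9/10 \<le> exp (-1/10::real)" using exp_ge_add_one_self[of "-1/10::real"] by simp
  hence e1: "exp (1/10::real) \<le> 10/9"
    by (simp add: exp_minus field_simps)
  have "exp (27/10::real) = exp (1/10) ^ 27" by (subst exp_of_nat_mult[symmetric]) simp
  also have "\<dots> \<le> (10/9)^27" by (rule power_mono[OF e1]) simp
  also have "\<dots> \<le> (20::real)" by (simp add: power_divide)
  finally show ?thesis .
qed

lemma ln_lower: "0 < r \<Longrightarrow> r \<le> 1/20 \<Longrightarrow> 27/10 \<le> - ln (r::real)"
proof -
  assume r: "0 < r" "r \<le> 1/20"
  have "27/10 \<le> ln (20::real)" using exp_27 by (subst ln_ge_iff) auto
  also have "ln 20 \<le> ln (1/r)" using r by (subst ln_le_cancel_iff) (auto simp: field_simps)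
  finally show ?thesis using r by (simp add: ln_div)
qed

lemma g_mono:
  fixes r t :: real
  assumes "0 < r" "r \<le> t" "t \<le> 1/20"
  shows "r * (- ln r) * ln (- ln r) \<le> t * (- ln t) * ln (- ln t)"
proof (rule DERIV_nonneg_imp_nondecreasing[OF assms(2)])
  fix x assume x: "r \<le> x" "x \<le> t"
  hence xp: "0 < x" "x \<le> 1/20" using assms by auto
  have L: "27/10 \<le> - ln x" using ln_lower xp by auto
  have D: "DERIV (\<lambda>x. x * (- ln x) * ln (- ln x)) x :> ((- ln x) * ln (- ln x) - ln (- ln x) - 1)"
    using xp L by (auto intro!: derivative_eq_intros simp: field_simps)
  define L where "L = - ln x"
  have L1: "27/10 \<le> L" using L L_def by simp
  have "ln (1/L) \<le> 1/L - 1" using L1 by (intro ln_le_minus_one) auto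
  hence h': "1 - 1/L \<le> ln L" using L1 by (simp add: ln_div)
  have "(L - 1) * (1 - 1/L) \<le> (L - 1) * ln L" using h' L1 by (intro mult_left_mono) auto
  moreover have "1 \<le> (L - 1) * (1 - 1/L)"
  proof -
    have q: "0 \<le> (L - 27/10)*(L - 3/10)" using L1 by simp
    have "(L-1)^2 - L = (L - 27/10)*(L - 3/10) + 19/100" by (simp add: power2_eq_square field_simps)
    hence "L \<le> (L-1)^2" using q by linarith
    moreover have "(L - 1) * (1 - 1/L) = (L-1)^2/L" using L1 by (simp add: field_simps power2_eq_square)
    ultimately show ?thesis using L1 by (simp add: le_divide_eq)
  qed
  ultimately have "0 \<le> (- ln x) * ln (- ln x) - ln (- ln x) - 1" unfolding L_def[symmetric] by (simp add: algebra_simps)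
  thus "\<exists>y. DERIV (\<lambda>x. x * (- ln x) * ln (- ln x)) x :> y \<and> 0 \<le> y" using D by blast
qed

lemma fr_alt: "0 < r \<Longrightarrow> r < 1 \<Longrightarrow> fr r = 1 / (r * (- ln r) * ln (- ln r))"
  unfolding fr_def by (simp add: abs_if)

lemma g_pos: "0 < r \<Longrightarrow> r \<le> 1/20 \<Longrightarrow> 0 < r * (- ln r) * ln (- ln (r::real))"
proof -
  assume a: "0 < r" "r \<le> 1/20"
  hence L: "27/10 \<le> - ln r" by (rule ln_lower)
  hence "0 < ln (- ln r)" by (intro ln_gt_zero) auto
  thus ?thesis using a L by (intro mult_pos_pos) auto
qed

lemma fr_pos: "0 < r \<Longrightarrow> r \<le> 1/20 \<Longrightarrow> 0 < fr r"
  using g_pos[of r] by (simp add: fr_alt)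

lemma fr_mono:
  assumes "0 < r" "r \<le> t" "t \<le> 1/20"
  shows "fr t \<le> fr r"
proof -
  have Lr: "27/10 \<le> - ln r" and Lt: "27/10 \<le> - ln t" using ln_lower assms by auto
  have p: "0 < r * (- ln r) * ln (- ln r)" using g_pos assms by simp
  have "1/(t * (- ln t) * ln (- ln t)) \<le> 1/(r * (- ln r) * ln (- ln r))"
  proof -
    have pt: "0 < t * (- ln t) * ln (- ln t)" using g_pos assms by simp
    show ?thesis by (rule divide_left_mono[OF g_mono[OF assms] _ mult_pos_pos[OF pt p]]) simp
  qed
  moreover have "fr t = 1/(t * (- ln t) * ln (- ln t))" using assms by (intro fr_alt) auto
  moreover have "fr r = 1/(r * (- ln r) * ln (- ln r))" using assms by (intro fr_alt) auto
  ultimately show ?thesis by simp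
qed





lemma min_powr_le:
  fixes A s b :: real
  assumes "0 < A" "0 < s" "0 \<le> b" "b \<le> 1"
  shows "min A s \<le> A powr b * s powr (1 - b)"
proof (cases "A \<le> s")
  case True
  have "A = A powr b * A powr (1 - b)" using assms by (simp add: powr_add[symmetric])
  also have "\<dots> \<le> A powr b * s powr (1 - b)" using True assms
    by (intro mult_left_mono powr_mono2) auto
  finally show ?thesis using True by simp
next
  case False
  have "s = s powr b * s powr (1 - b)" using assms by (simp add: powr_add[symmetric])
  also have "\<dots> \<le> A powr b * s powr (1 - b)" using False assms
    by (intro mult_right_mono powr_mono2) auto
  finally show ?thesis using False by simp
qed

lemma sum_bound:
  fixes E s b :: real
  assumes E: "0 < E" and s: "0 < s" and b: "0 < b" "b \<le> 1"
  shows "summable (\<lambda>j. min (E*(1/4)^j) s)"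
    and "(\<Sum>j. min (E*(1/4)^j) s) \<le> E powr b * s powr (1-b) / (1 - (1/4) powr b)"
proof -
  define q where "q = (1/4::real) powr b"
  have q0: "0 < q" unfolding q_def by simp
  have q1: "q < 1" unfolding q_def using b by (simp add: powr_def mult_pos_neg)
  have tm: "min (E*(1/4)^j) s \<le> E powr b * s powr (1-b) * q^j" for j
  proof -
    have "((1/4::real)^j) powr b = q^j"
      unfolding q_def by (simp add: powr_power powr_realpow[symmetric] powr_powr mult.commute)
    thus ?thesis using min_powr_le[of "E*(1/4)^j" s b] E s b by (simp add: powr_mult mult_ac)
  qed
  have sg: "summable (\<lambda>j. E powr b * s powr (1-b) * q^j)"
    using q0 q1 by (intro summable_mult summable_geometric) auto
  show sm: "summable (\<lambda>j. min (E*(1/4)^j) s)"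
    by (rule summable_comparison_test[OF _ sg]) (use tm E s in \<open>auto intro!: exI[of _ 0]\<close>)
  have "(\<Sum>j. min (E*(1/4)^j) s) \<le> (\<Sum>j. E powr b * s powr (1-b) * q^j)"
    by (rule suminf_le[OF tm sm sg])
  also have "\<dots> = E powr b * s powr (1-b) * (1 / (1 - q))"
    using q0 q1 by (subst suminf_mult) (auto simp: suminf_geometric)
  finally show "(\<Sum>j. min (E*(1/4)^j) s) \<le> E powr b * s powr (1-b) / (1 - (1/4) powr b)"
    unfolding q_def by simp
qed



lemma ln4: "1 \<le> ln (4::real)" "ln (4::real) \<le> 2"
proof -
  show "1 \<le> ln (4::real)" using exp_le by (subst ln_ge_iff) auto
  have "ln (2::real) \<le> 1" using ln_le_minus_one[of "2::real"] by simp
  moreover have "ln (4::real) = 2 * ln 2"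
    using ln_realpow[of "2::real" 2] by simp
  ultimately show "ln (4::real) \<le> 2" by simp
qed

lemma aux_y:
  fixes y :: real assumes "0 < y" "y \<le> 1" shows "y/2 \<le> 1 - 1/(1+y)"
proof -
  have "1 - 1/(1+y) = y/(1+y)" using assms by (simp add: field_simps)
  moreover have "y/2 \<le> y/(1+y)" using assms by (intro divide_left_mono) auto
  ultimately show ?thesis by simp
qed

lemma key_bound:
  fixes e s :: real
  assumes e: "0 < e" "e < 1/5" and s: "0 < s" "s \<le> 1/25"
  shows "16 * fr s * (\<Sum>j. min (e^2*(1/4)^j) s) \<le> 22 * e^2 * fr (e^2) + 96 / ln (- ln (e^2))"
proof -
  define E where "E = e^2"
  have "e*e \<le> (1/5)*(1/5)" using e by (intro mult_mono) auto
  hence E0: "0 < E" and E1: "E \<le> 1/25" using e unfolding E_def by (auto simp: power2_eq_square)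
  have frE: "0 < fr E" using fr_pos E0 E1 by simp
  have LE: "27/10 \<le> - ln E" using ln_lower E0 E1 by simp
  have lnLE: "0 < ln (- ln E)" using LE by (intro ln_gt_zero) auto
  have frs: "0 < fr s" using fr_pos s by simp
  have Ls: "27/10 \<le> - ln s" using ln_lower s by simp
  have "16 * fr s * (\<Sum>j. min (E*(1/4)^j) s) \<le> 22 * E * fr E + 96 / ln (- ln E)"
  proof (cases "E \<le> s")
    case True
    have "(\<Sum>j. min (E*(1/4)^j) s) \<le> E powr 1 * s powr (1-1) / (1 - (1/4) powr 1)"
      using sum_bound(2)[of E s 1] E0 s by simp
    also have "\<dots> = 4/3 * E" using E0 s by simp
    finally have sb: "(\<Sum>j. min (E*(1/4)^j) s) \<le> 4/3 * E" .
    have fm: "fr s \<le> fr E" using fr_mono[of E s] True E0 s by simp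
    have "16 * fr s * (\<Sum>j. min (E*(1/4)^j) s) \<le> 16 * fr E * (4/3 * E)"
    proof (rule mult_mono)
      show "0 \<le> (\<Sum>j. min (E*(1/4)^j) s)"
        using E0 s by (intro suminf_nonneg sum_bound(1)[of E s 1]) auto
    qed (use sb fm frs frE in auto)
    also have "\<dots> \<le> 22 * E * fr E" using frE E0 by simp
    moreover have "0 \<le> 96 / ln (- ln E)" using lnLE by simp
    ultimately show ?thesis by linarith
  next
    case False
    define L where "L = - ln s"
    define b where "b = 1 / L"
    have L1: "27/10 \<le> L" using Ls L_def by simp
    have b0: "0 < b" and b1: "b \<le> 1" using L1 unfolding b_def by auto
    have "(\<Sum>j. min (E*(1/4)^j) s) \<le> E powr b * s powr (1-b) / (1 - (1/4) powr b)"
      using sum_bound(2)[of E s b] E0 s b0 b1 by simp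
    also have "\<dots> \<le> 1 * (3 * s) / (b * ln 4 / 2)"
    proof (intro frac_le mult_mono)
      show "E powr b \<le> 1" using E0 E1 b0 by (intro powr_le1) auto
      have "s powr (1 - b) = s * exp 1"
        using s L1 unfolding powr_def b_def L_def by (simp add: algebra_simps exp_diff exp_add)
      thus "s powr (1 - b) \<le> 3 * s" using exp_le s by simp
      have y1: "b * ln 4 \<le> 1"
      proof -
        have "b * ln 4 \<le> b * 2" using ln4 b0 by (intro mult_left_mono) auto
        also have "\<dots> \<le> 1" using L1 unfolding b_def by (simp add: field_simps)
        finally show ?thesis .
      qed
      have y0: "0 < b * ln 4" using b0 ln4 by simp
      have "(1/4::real) powr b = exp (- (b * ln 4))" by (simp add: powr_def ln_div)
      also have "\<dots> = 1 / exp (b * ln 4)" by (simp add: exp_minus field_simps)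
      also have "\<dots> \<le> 1 / (1 + b * ln 4)" using y0 exp_ge_add_one_self[of "b * ln 4"]
        by (intro divide_left_mono) auto
      finally have "(1/4::real) powr b \<le> 1 / (1 + b * ln 4)" .
      moreover have "b * ln 4 / 2 \<le> 1 - 1 / (1 + b * ln 4)" using aux_y[OF y0 y1] .
      ultimately show "b * ln 4 / 2 \<le> 1 - (1/4) powr b" by linarith
      show "0 < b * ln 4 / 2" using y0 by simp
    qed (use s in auto)
    also have "\<dots> \<le> 6 * s * L"
    proof -
      have "1 * (3 * s) / (b * ln 4 / 2) = 6 * s * L / ln 4" using L1 unfolding b_def by (simp add: field_simps)
      also have "\<dots> \<le> 6 * s * L" using ln4 s L1 by (simp add: field_simps mult_left_mono)
      finally show ?thesis .
    qed
    finally have sb: "(\<Sum>j. min (E*(1/4)^j) s) \<le> 6 * s * L" .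
    have lnL: "0 < ln L" using L1 by (intro ln_gt_zero) auto
    have frs_eq: "fr s = 1 / (s * L * ln L)" using s Ls unfolding L_def by (intro fr_alt) auto
    have "16 * fr s * (\<Sum>j. min (E*(1/4)^j) s) \<le> 16 * fr s * (6 * s * L)"
      using sb frs by (intro mult_left_mono) auto
    also have "\<dots> = 96 / ln L" using frs_eq s L1 lnL by (simp add: field_simps)
    also have "\<dots> \<le> 96 / ln (- ln E)"
    proof -
      have "- ln E \<le> L" using False s E0 unfolding L_def by simp
      hence "ln (- ln E) \<le> ln L" using LE by (subst ln_le_cancel_iff) auto
      thus ?thesis using lnLE by (intro divide_left_mono) auto
    qed
    moreover have "0 \<le> 22 * E * fr E" using frE E0 by simp
    ultimately show ?thesis by linarith
  qed
  thus ?thesis unfolding E_def .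
qed



definition cylS :: "real \<Rightarrow> (real^3) set" where
  "cylS s = {z. \<bar>z$2\<bar> \<le> sqrt s \<and> \<bar>z$3\<bar> \<le> sqrt s}"

lemma cylS_sets[measurable]: "cylS s \<in> sets lborel"
  unfolding cylS_def by measurable

lemma ball_sets: "ball (x::real^3) r \<in> sets lborel"
  by (simp add: borel_open)

lemma prod_3': "prod f (UNIV::3 set) = f 1 * f 2 * f 3"
  unfolding UNIV_3 by (simp add: ac_simps)

lemma emeasure_cbox3:
  fixes a b :: "real^3"
  assumes "\<And>i. a$i \<le> b$i"
  shows "emeasure lborel (cbox a b) = ennreal ((b$1-a$1)*(b$2-a$2)*(b$3-a$3))"
proof -
  have ne: "cbox a b \<noteq> {}" using assms by (auto simp: box_ne_empty(1) cart_eq_inner_axis Basis_vec_def)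
  have "emeasure lborel (cbox a b) = ennreal (measure lborel (cbox a b))"
    using emeasure_lborel_cbox_finite[of a b] by (intro emeasure_eq_ennreal_measure) auto
  also have "measure lborel (cbox a b) = (b$1-a$1)*(b$2-a$2)*(b$3-a$3)"
    by (simp only: content_cbox_cart[OF ne] prod_3')
  finally show ?thesis .
qed

lemma comp_le: "\<bar>z$i - x$i\<bar> \<le> dist z (x::real^3)"
  unfolding dist_norm using component_le_norm_cart[of "z - x" i] by simp

lemma emeasure_cyl_ball:
  fixes x :: "real^3" and r s :: real
  assumes r: "0 < r" and s: "0 < s"
  shows "emeasure lborel (cylS s \<inter> ball x r) \<le> ennreal (8 * r * min (r^2) s)"
proof (cases "r^2 \<le> s")
  case True
  define a :: "real^3" where "a = vector [x$1 - r, x$2 - r, x$3 - r]"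
  define b :: "real^3" where "b = vector [x$1 + r, x$2 + r, x$3 + r]"
  have ab: "a$i \<le> b$i" for i
    using r exhaust_3[of i] unfolding a_def b_def by auto
  have "cylS s \<inter> ball x r \<subseteq> cbox a b"
  proof
    fix z assume "z \<in> cylS s \<inter> ball x r"
    hence d: "dist z x < r" by (simp add: dist_commute)
    have "\<bar>z$i - x$i\<bar> < r" for i using comp_le[of z i x] d by linarith
    show "z \<in> cbox a b" unfolding mem_box_cart
    proof
      fix i :: 3
      have h: "\<bar>z$i - x$i\<bar> < r" by fact
      consider "i = 1" | "i = 2" | "i = 3" using exhaust_3 by blast
      thus "a $ i \<le> z $ i \<and> z $ i \<le> b $ i" using h unfolding a_def b_def
        by cases (auto simp: abs_less_iff)
    qed
  qed
  hence "emeasure lborel (cylS s \<inter> ball x r) \<le> emeasure lborel (cbox a b)"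
    by (intro emeasure_mono) auto
  also have "\<dots> = ennreal (8 * r * min (r^2) s)"
    using True ab by (simp add: emeasure_cbox3 a_def b_def power2_eq_square mult_ac)
  finally show ?thesis .
next
  case False
  define a :: "real^3" where "a = vector [x$1 - r, - sqrt s, - sqrt s]"
  define b :: "real^3" where "b = vector [x$1 + r, sqrt s, sqrt s]"
  have ab: "a$i \<le> b$i" for i
    using r s exhaust_3[of i] unfolding a_def b_def by auto
  have "cylS s \<inter> ball x r \<subseteq> cbox a b"
  proof
    fix z assume z: "z \<in> cylS s \<inter> ball x r"
    hence d: "dist z x < r" by (simp add: dist_commute)
    have "\<bar>z$1 - x$1\<bar> < r" using comp_le[of z 1 x] d by linarith
    show "z \<in> cbox a b" unfolding mem_box_cart
    proof
      fix i :: 3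
      consider "i = 1" | "i = 2" | "i = 3" using exhaust_3 by blast
      thus "a $ i \<le> z $ i \<and> z $ i \<le> b $ i" using z \<open>\<bar>z$1 - x$1\<bar> < r\<close> unfolding a_def b_def cylS_def
        by cases (auto simp: abs_less_iff abs_le_iff)
    qed
  qed
  hence "emeasure lborel (cylS s \<inter> ball x r) \<le> emeasure lborel (cbox a b)"
    by (intro emeasure_mono) auto
  also have "\<dots> = ennreal ((2 * r) * (2 * sqrt s) * (2 * sqrt s))"
    using ab by (simp add: emeasure_cbox3 a_def b_def)
  also have "(2 * r) * (2 * sqrt s) * (2 * sqrt s) = 8 * r * (sqrt s * sqrt s)" by (simp add: algebra_simps)
  also have "sqrt s * sqrt s = min (r^2) s" using s False by simp
  finally show ?thesis .
qed



lemma shell_pt: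
  fixes x z :: "real^3" and e :: real
  assumes e: "0 < e"
  shows "ennreal (indicator C z / dist z x) * indicator (ball x e) z
    \<le> (\<Sum>j. ennreal (2^Suc j / e) * indicator (C \<inter> ball x (e / 2^j)) z)"
proof (cases "z \<in> C \<and> z \<in> ball x e \<and> z \<noteq> x")
  case False
  thus ?thesis by (auto simp: indicator_def)
next
  case True
  define d where "d = dist z x"
  have d0: "0 < d" and de: "d < e" using True unfolding d_def by (auto simp: dist_commute)
  obtain n where n: "e / d < 2^n" using real_arch_pow[of 2 "e/d"] by auto
  have ex: "\<exists>n. e / 2^n \<le> d"
    using n d0 by (intro exI[of _ n]) (simp add: field_simps)
  define p where "p = (LEAST n. e / 2^n \<le> d)"
  have p: "e / 2^p \<le> d" unfolding p_def by (rule LeastI_ex[OF ex])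
  have p0: "p \<noteq> 0"
  proof
    assume "p = 0" with p de show False by simp
  qed
  define m where "m = p - 1"
  have pm: "p = Suc m" using p0 unfolding m_def by simp
  have "\<not> e / 2^m \<le> d" unfolding m_def p_def
    using p0 Least_le not_less_Least p_def by (metis diff_less less_numeral_extra(1) neq0_conv)
  hence zm: "z \<in> ball x (e / 2^m)" using True unfolding d_def by (simp add: dist_commute)
  have "1 / d \<le> 2^Suc m / e"
    using p d0 e unfolding pm by (simp add: field_simps)
  hence "ennreal (indicator C z / dist z x) * indicator (ball x e) z
      \<le> ennreal (2^Suc m / e) * indicator (C \<inter> ball x (e / 2^m)) z"
    using True zm unfolding d_def by (simp add: indicator_def ennreal_leI)
  also have "\<dots> \<le> (\<Sum>j. ennreal (2^Suc j / e) * indicator (C \<inter> ball x (e / 2^j)) z)"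
    (is "?a \<le> suminf ?f")
  proof -
    have "?a = sum ?f {m}" by (simp only: sum.insert finite.emptyI empty_iff sum.empty add_0_right not_False_eq_True)
    also have "\<dots> \<le> suminf ?f" by (rule sum_le_suminf) auto
    finally show ?thesis .
  qed
  finally show ?thesis .
qed

lemma integral_cyl:
  fixes x :: "real^3" and e s :: real
  assumes e: "0 < e" and s: "0 < s"
  shows "(\<integral>\<^sup>+z. ennreal (indicator (cylS s) z / dist z x) * indicator (ball x e) z \<partial>lborel)
    \<le> ennreal (16 * (\<Sum>j. min (e^2*(1/4)^j) s))"
proof -
  have "(\<integral>\<^sup>+z. ennreal (indicator (cylS s) z / dist z x) * indicator (ball x e) z \<partial>lborel)
     \<le> (\<integral>\<^sup>+z. (\<Sum>j. ennreal (2^Suc j / e) * indicator (cylS s \<inter> ball x (e / 2^j)) z) \<partial>lborel)"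
    by (intro nn_integral_mono shell_pt e)
  also have "\<dots> = (\<Sum>j. \<integral>\<^sup>+z. ennreal (2^Suc j / e) * indicator (cylS s \<inter> ball x (e / 2^j)) z \<partial>lborel)"
  proof (intro nn_integral_suminf borel_measurable_times_ennreal borel_measurable_const borel_measurable_indicator)
    fix j :: nat
    show "cylS s \<inter> ball x (e / 2^j) \<in> sets lborel"
      by (metis sets.Int cylS_sets ball_sets)
  qed
  also have "\<dots> = (\<Sum>j. ennreal (2^Suc j / e) * emeasure lborel (cylS s \<inter> ball x (e / 2^j)))"
    by (intro suminf_cong nn_integral_cmult_indicator) (metis sets.Int cylS_sets ball_sets)
  also have "\<dots> \<le> (\<Sum>j. ennreal (2^Suc j / e) * ennreal (8 * (e / 2^j) * min ((e / 2^j)^2) s))"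
    by (intro suminf_le mult_left_mono emeasure_cyl_ball) (use e s in auto)
  also have "\<dots> = (\<Sum>j. ennreal (16 * min (e^2*(1/4)^j) s))"
  proof (intro suminf_cong)
    fix j :: nat
    have p4: "((2::real)^j)^2 = 4^j" by (simp add: power2_eq_square power_mult_distrib[symmetric])
    have "(e / 2^j)^2 = e^2*(1/4)^j" by (simp add: power_divide p4 power_one_over)
    hence "(2::real)^Suc j / e * (8 * (e / 2^j) * min ((e / 2^j)^2) s) = 16 * min (e^2*(1/4)^j) s"
      using e by (simp add: field_simps)
    thus "ennreal (2^Suc j / e) * ennreal (8 * (e / 2^j) * min ((e / 2^j)^2) s) = ennreal (16 * min (e^2*(1/4)^j) s)"
      using e by (simp add: ennreal_mult'[symmetric])
  qed
  also have "\<dots> = ennreal (\<Sum>j. 16 * min (e^2*(1/4)^j) s)"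
    using e s sum_bound(1)[of "e^2" s 1]
    by (intro suminf_ennreal2) (auto intro: summable_mult)
  also have "\<dots> = ennreal (16 * (\<Sum>j. min (e^2*(1/4)^j) s))"
    using e s sum_bound(1)[of "e^2" s 1] by (subst suminf_mult) auto
  finally show ?thesis .
qed



lemma B_lim: "((\<lambda>e::real. 22 * e^2 * fr (e^2) + 96 / ln (- ln (e^2))) \<longlongrightarrow> 0) (at_right 0)"
  unfolding fr_def by real_asymp

lemma cyl_cylS: "z \<in> cyl k (sqrt s) \<Longrightarrow> 0 \<le> s \<Longrightarrow> z \<in> cylS s"
proof -
  assume z: "z \<in> cyl k (sqrt s)" and s: "0 \<le> s"
  hence h: "(z$2)^2 + (z$3)^2 \<le> s" unfolding cyl_def using s by simp
  have "\<bar>z$2\<bar> = sqrt ((z$2)^2)" by simp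
  also have "\<dots> \<le> sqrt s" using h by (intro real_sqrt_le_mono) (smt (verit) zero_le_power2)
  finally have a: "\<bar>z$2\<bar> \<le> sqrt s" .
  have "\<bar>z$3\<bar> = sqrt ((z$3)^2)" by simp
  also have "\<dots> \<le> sqrt s" using h by (intro real_sqrt_le_mono) (smt (verit) zero_le_power2)
  finally have b: "\<bar>z$3\<bar> \<le> sqrt s" .
  show ?thesis using a b unfolding cylS_def by simp
qed

lemma cyl_disj:
  assumes "z \<in> cyl j r" "w \<in> cyl k r'" "\<bar>z$1 - w$1\<bar> < 1/2"
  shows "j = k"
proof (rule ccontr)
  assume "j \<noteq> k"
  hence "j < k \<or> k < j" by auto
  hence "real j + 1 \<le> real k \<or> real k + 1 \<le> real j" by auto
  thus False using assms unfolding cyl_def by auto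
qed

lemma V_bound:
  fixes x :: "real^3" and e :: real and n k :: nat
  assumes e: "0 < e" "e \<le> 1/4" and k: "k \<in> {1..n}"
    and w: "w \<in> ball x e" "w \<in> cyl k (sqrt (real k / (25 * real n)))"
    and z: "z \<in> ball x e"
  shows "\<bar>Vn n z\<bar> \<le> fr (real k / (25 * real n)) * indicator (cylS (real k / (25 * real n))) z"
proof -
  define s where "s = real k / (25 * real n)"
  have n1: "1 \<le> n" and k1: "1 \<le> k" "k \<le> n" using k by auto
  have s0: "0 < s" unfolding s_def using k1 by simp
  have zw: "\<bar>z$1 - w$1\<bar> < 1/2"
  proof -
    have "\<bar>z$1 - w$1\<bar> \<le> dist z w" by (rule comp_le)
    also have "\<dots> \<le> dist z x + dist x w" by (rule dist_triangle)
    also have "\<dots> < 1/2" using z w e by (simp add: dist_commute)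
    finally show ?thesis .
  qed
  show ?thesis
  proof (cases "z \<in> cyl k (sqrt s)")
    case True
    have sum1: "(\<Sum>i=1..n. indicator (cyl i (sqrt (real i / (25 * real n)))) z) = (1::real)"
    proof -
      have "(\<Sum>i=1..n. indicator (cyl i (sqrt (real i / (25 * real n)))) z)
          = (\<Sum>i=1..n. if i = k then 1 else (0::real))"
      proof (rule sum.cong)
        fix i assume "i \<in> {1..n}"
        show "indicator (cyl i (sqrt (real i / (25 * real n)))) z = (if i = k then 1 else (0::real))"
        proof (cases "i = k")
          case True
          thus ?thesis using \<open>z \<in> cyl k (sqrt s)\<close> unfolding s_def by simp
        next
          case ik: False
          have "z \<notin> cyl i (sqrt (real i / (25 * real n)))"
          proof
            assume zi: "z \<in> cyl i (sqrt (real i / (25 * real n)))"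
            have "i = k" by (rule cyl_disj[OF zi \<open>z \<in> cyl k (sqrt s)\<close>]) simp
            thus False using ik by simp
          qed
          thus ?thesis using ik by simp
        qed
      qed simp
      also have "\<dots> = 1" using k by simp
      finally show ?thesis .
    qed
    have z1: "real k \<le> z$1" "z$1 \<le> real k + 1/4" using True unfolding cyl_def by auto
    have t1: "s \<le> z$1 / (25 * real n)" using z1 n1 unfolding s_def by (simp add: divide_right_mono)
    have t2: "z$1 / (25 * real n) \<le> 1/20"
    proof -
      have "z$1 \<le> 5/4 * real n" using z1 k1 n1 by simp
      thus ?thesis using n1 by (simp add: field_simps)
    qed
    have "fr (z$1 / (25 * real n)) \<le> fr s" by (rule fr_mono[OF s0 t1 t2])
    moreover have "0 < fr (z$1 / (25 * real n))" using s0 t1 t2 by (intro fr_pos) auto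
    moreover have "z \<in> cylS s" using True cyl_cylS s0 by auto
    ultimately show ?thesis unfolding Vn_def sum1 s_def[symmetric] by simp
  next
    case False
    have sum0: "(\<Sum>i=1..n. indicator (cyl i (sqrt (real i / (25 * real n)))) z) = (0::real)"
    proof (rule sum.neutral, rule ballI)
      fix i assume i: "i \<in> {1..n}"
      show "indicator (cyl i (sqrt (real i / (25 * real n)))) z = (0::real)"
      proof (cases "z \<in> cyl i (sqrt (real i / (25 * real n)))")
        case True
        have "i = k" by (rule cyl_disj[OF True w(2) zw])
        hence "z \<in> cyl k (sqrt s)" using True unfolding s_def by simp
        thus ?thesis using False by simp
      qed (simp add: indicator_def)
    qed
    have "0 \<le> fr s" using fr_pos[of s] s0 k1 n1 unfolding s_def by (simp add: field_simps)
    thus ?thesis unfolding Vn_def sum0 s_def[symmetric] by simp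
  qed
qed

lemma V_zero:
  assumes "\<not> (\<exists>k\<in>{1..n}. \<exists>w\<in>ball x e. w \<in> cyl k (sqrt (real k / (25 * real n))))"
    and "z \<in> ball x e"
  shows "Vn n z = 0"
proof -
  have "(\<Sum>i=1..n. indicator (cyl i (sqrt (real i / (25 * real n)))) z) = (0::real)"
    using assms by (intro sum.neutral) (auto simp: indicator_def)
  thus ?thesis unfolding Vn_def by simp
qed



lemma main_bound:
  fixes x :: "real^3" and e :: real and n :: nat
  assumes e: "0 < e" "e < 1/5"
  shows "set_nn_integral lborel (ball x e) (\<lambda>z. ennreal (\<bar>Vn n z\<bar> / dist z x))
     \<le> ennreal (22 * e^2 * fr (e^2) + 96 / ln (- ln (e^2)))"
proof (cases "\<exists>k\<in>{1..n}. \<exists>w\<in>ball x e. w \<in> cyl k (sqrt (real k / (25 * real n)))")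
  case True
  then obtain k w where k: "k \<in> {1..n}" and w: "w \<in> ball x e" "w \<in> cyl k (sqrt (real k / (25 * real n)))"
    by blast
  define s where "s = real k / (25 * real n)"
  have s0: "0 < s" and s1: "s \<le> 1/25" using k unfolding s_def by (auto simp: field_simps)
  have frs: "0 < fr s" using fr_pos[of s] s0 s1 by simp
  have meas: "(\<lambda>z. ennreal (indicator (cylS s) z / dist z x) * indicator (ball x e) z) \<in> borel_measurable lborel"
  proof -
    have "cylS s \<in> sets borel" using cylS_sets by simp
    moreover have "ball x e \<in> sets borel" using ball_sets by simp
    ultimately show ?thesis by measurable
  qed
  have "set_nn_integral lborel (ball x e) (\<lambda>z. ennreal (\<bar>Vn n z\<bar> / dist z x))
      \<le> (\<integral>\<^sup>+z. ennreal (fr s) * (ennreal (indicator (cylS s) z / dist z x) * indicator (ball x e) z) \<partial>lborel)"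
  proof (intro nn_integral_mono)
    fix z :: "real^3"
    show "ennreal (\<bar>Vn n z\<bar> / dist z x) * indicator (ball x e) z
        \<le> ennreal (fr s) * (ennreal (indicator (cylS s) z / dist z x) * indicator (ball x e) z)"
    proof (cases "z \<in> ball x e")
      case True
      have "\<bar>Vn n z\<bar> \<le> fr s * indicator (cylS s) z"
        unfolding s_def by (rule V_bound[OF e(1) _ k w True]) (use e in simp)
      hence "\<bar>Vn n z\<bar> / dist z x \<le> fr s * (indicator (cylS s) z / dist z x)"
        by (simp add: divide_right_mono)
      hence "ennreal (\<bar>Vn n z\<bar> / dist z x) \<le> ennreal (fr s * (indicator (cylS s) z / dist z x))"
        by (rule ennreal_leI)
      also have "\<dots> = ennreal (fr s) * ennreal (indicator (cylS s) z / dist z x)"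
        by (rule ennreal_mult) (use frs in auto)
      finally show ?thesis using True by simp
    qed simp
  qed
  also have "\<dots> = ennreal (fr s) * (\<integral>\<^sup>+z. ennreal (indicator (cylS s) z / dist z x) * indicator (ball x e) z \<partial>lborel)"
    by (rule nn_integral_cmult[OF meas])
  also have "\<dots> \<le> ennreal (fr s) * ennreal (16 * (\<Sum>j. min (e^2*(1/4)^j) s))"
    by (intro mult_left_mono integral_cyl e s0) simp
  also have "\<dots> = ennreal (fr s * (16 * (\<Sum>j. min (e^2*(1/4)^j) s)))"
  proof -
    have sn: "0 \<le> (\<Sum>j. min (e^2*(1/4)^j) s)"
      using e s0 by (intro suminf_nonneg sum_bound(1)[of "e^2" s 1]) auto
    show ?thesis by (rule ennreal_mult[symmetric]) (use frs sn in auto)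
  qed
  also have "\<dots> = ennreal (16 * fr s * (\<Sum>j. min (e^2*(1/4)^j) s))"
    by (simp add: mult_ac)
  also have "\<dots> \<le> ennreal (22 * e^2 * fr (e^2) + 96 / ln (- ln (e^2)))"
    by (intro ennreal_leI key_bound e s0 s1)
  finally show ?thesis .
next
  case False
  have "set_nn_integral lborel (ball x e) (\<lambda>z. ennreal (\<bar>Vn n z\<bar> / dist z x))
      = (\<integral>\<^sup>+z. (0::ennreal) \<partial>(lborel::(real^3) measure))"
  proof (rule nn_integral_cong)
    fix z :: "real^3"
    show "ennreal (\<bar>Vn n z\<bar> / dist z x) * indicator (ball x e) z = 0"
      using V_zero[OF False, of z] by (cases "z \<in> ball x e") auto
  qed
  thus ?thesis by simp
qed

theorem corollary4p2:
  shows "((\<lambda>\<epsilon>::real. SUP x::real^3. SUP n::nat.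
            set_nn_integral lborel (ball x \<epsilon>) (\<lambda>z. ennreal (\<bar>Vn n z\<bar> / dist z x)))
          \<longlongrightarrow> 0) (at_right 0)"
proof (rule tendsto_sandwich[where f = "\<lambda>_. 0" and h = "\<lambda>e. ennreal (22 * e^2 * fr (e^2) + 96 / ln (- ln (e^2)))"])
  show "\<forall>\<^sub>F e in at_right 0. (0::ennreal) \<le> (SUP x::real^3. SUP n::nat.
            set_nn_integral lborel (ball x e) (\<lambda>z. ennreal (\<bar>Vn n z\<bar> / dist z x)))"
    by simp
  show "\<forall>\<^sub>F e in at_right 0. (SUP x::real^3. SUP n::nat.
            set_nn_integral lborel (ball x e) (\<lambda>z. ennreal (\<bar>Vn n z\<bar> / dist z x)))
        \<le> ennreal (22 * e^2 * fr (e^2) + 96 / ln (- ln (e^2)))"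
    unfolding eventually_at_right_field
    by (rule exI[of _ "1/5"]) (auto intro!: SUP_least main_bound)
  show "((\<lambda>_. 0::ennreal) \<longlongrightarrow> 0) (at_right 0)" by simp
  have "((\<lambda>e. ennreal (22 * e^2 * fr (e^2) + 96 / ln (- ln (e^2)))) \<longlongrightarrow> ennreal 0) (at_right 0)"
    by (rule tendsto_ennrealI[OF B_lim])
  thus "((\<lambda>e. ennreal (22 * e^2 * fr (e^2) + 96 / ln (- ln (e^2)))) \<longlongrightarrow> 0) (at_right 0)" by simp
qed


end
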